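(* Let $A$ and $B$ be bounded lattices and let $(\alpha,\beta)$ be a retractable Galois connection between $A$ and $B$ such that $\beta(0)=0$. (i) If $b,b'\in B$ are such that $\beta(b)$ is essential in $[0,\beta(b')]$, then $b\wedge b'$ is essential in $[0,b']$. (ii) If $a,a'\in A$ are such that $a$ is essential in $[0,a']$ and $a'$ is a Galois element, then $\alpha(a)$ is essential in $[0,\alpha(a')]$. Assume in addition that either (E) $(\alpha,\beta)$ is essential, or (C) $(\alpha,\beta)$ is cyclically essential and $A$ is cyclically generated. Then: (iii) If $b,b'\in B$ are such that $b$ is essential in $[0,b']$, then $\beta(b)$ is essential in $[0,\beta(b')]$. (iv) If $a,a'\in A$ (where, in case (C), $a$ is additionally assumed to be cyclic) are such that $\alpha(a)$ is essential in $[0,\alpha(a')]$, then $a\wedge a'$ is essential in $[0,a']$.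
   Context: A bounded lattice $(A,\wedge,\vee,0,1)$ has least element $0$ and greatest element $1$, with $0\neq1$; $[a,a']=\{x: a\le x\le a'\}$. A Galois connection between lattices $A$ and $B$ is a pair of order-preserving maps $\alpha:A\to B$, $\beta:B\to A$ such that $\alpha(a)\le b$ iff $a\le\beta(b)$ for all $a\in A$, $b\in B$. An element $a\in A$ is Galois if $\beta\alpha(a)=a$. For $a\le c$, $a$ is essential in $[0,c]$ if for every $x\le c$, $a\wedge x=0$ implies $x=0$. An element $a$ is cyclic if $[0,a]$ is a distributive lattice satisfying the ascending chain condition; $A$ is cyclically generated if every element of $A$ is a join of cyclic elements. The Galois connection is essential (resp. cyclically essential) if for every $a\in A$ (resp. every cyclic $a\in A$), $a$ is essential in $[0,\beta\alpha(a)]$; it is retractable if for every $b\in B$, $\alpha\beta(b)$ is essential in $[0,b]$. *)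

theory Defs
  imports Main
begin

text \<open>Bounded lattices are modelled by the type class bounded_lattice (bot = 0, top = 1);
  the requirement 0 \<noteq> 1 is stated as an explicit hypothesis in the theorem.\<close>

definition galois_conn :: "('a::order \<Rightarrow> 'b::order) \<Rightarrow> ('b \<Rightarrow> 'a) \<Rightarrow> bool" where
  "galois_conn \<alpha> \<beta> \<longleftrightarrow> mono \<alpha> \<and> mono \<beta> \<and> (\<forall>a b. \<alpha> a \<le> b \<longleftrightarrow> a \<le> \<beta> b)"

definition galois_elem :: "('a \<Rightarrow> 'b) \<Rightarrow> ('b \<Rightarrow> 'a) \<Rightarrow> 'a \<Rightarrow> bool" where
  "galois_elem \<alpha> \<beta> a \<longleftrightarrow> \<beta> (\<alpha> a) = a"

definition essential_in :: "'a::bounded_lattice \<Rightarrow> 'a \<Rightarrow> bool" where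
  "essential_in a c \<longleftrightarrow> a \<le> c \<and> (\<forall>x. x \<le> c \<longrightarrow> inf a x = bot \<longrightarrow> x = bot)"

definition cyclic :: "'a::bounded_lattice \<Rightarrow> bool" where
  "cyclic a \<longleftrightarrow>
     (\<forall>x y z. x \<le> a \<longrightarrow> y \<le> a \<longrightarrow> z \<le> a \<longrightarrow> inf x (sup y z) = sup (inf x y) (inf x z)) \<and>
     \<not> (\<exists>f :: nat \<Rightarrow> 'a. (\<forall>n. f n \<le> a) \<and> (\<forall>n. f n < f (Suc n)))"

definition is_join :: "'a::order \<Rightarrow> 'a set \<Rightarrow> bool" where
  "is_join a S \<longleftrightarrow> (\<forall>s\<in>S. s \<le> a) \<and> (\<forall>u. (\<forall>s\<in>S. s \<le> u) \<longrightarrow> a \<le> u)"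

definition cyclically_generated :: "'a::bounded_lattice itself \<Rightarrow> bool" where
  "cyclically_generated _ \<longleftrightarrow> (\<forall>a::'a. \<exists>S. (\<forall>s\<in>S. cyclic s) \<and> is_join a S)"

definition essential_gc :: "('a::bounded_lattice \<Rightarrow> 'b) \<Rightarrow> ('b \<Rightarrow> 'a) \<Rightarrow> bool" where
  "essential_gc \<alpha> \<beta> \<longleftrightarrow> (\<forall>a. essential_in a (\<beta> (\<alpha> a)))"

definition cyclically_essential_gc :: "('a::bounded_lattice \<Rightarrow> 'b) \<Rightarrow> ('b \<Rightarrow> 'a) \<Rightarrow> bool" where
  "cyclically_essential_gc \<alpha> \<beta> \<longleftrightarrow> (\<forall>a. cyclic a \<longrightarrow> essential_in a (\<beta> (\<alpha> a)))"

definition retractable_gc :: "('a \<Rightarrow> 'b::bounded_lattice) \<Rightarrow> ('b \<Rightarrow> 'a) \<Rightarrow> bool" where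
  "retractable_gc \<alpha> \<beta> \<longleftrightarrow> (\<forall>b. essential_in (\<alpha> (\<beta> b)) b)"

end

theory Submission
  imports Defs
begin

lemma inf_bot_mono:
  fixes c :: "'a::bounded_lattice"
  assumes "x \<le> y" "inf c y = bot" shows "inf c x = bot"
proof -
  have "inf c x \<le> inf c y" using assms(1) by (simp add: le_infI2)
  then show ?thesis using assms(2) by (simp add: bot_unique)
qed

lemma inf_bot_in:
  fixes b :: "'a::bounded_lattice"
  assumes "x \<le> b'" "inf (inf b b') x = bot" shows "inf b x = bot"
proof -
  have "inf b x \<le> inf (inf b b') x" using assms(1) by (simp add: le_infI1 le_infI2)
  then show ?thesis using assms(2) by (simp add: bot_unique)
qed

lemma gc_adj: "galois_conn \<alpha> \<beta> \<Longrightarrow> (\<alpha> a \<le> b) = (a \<le> \<beta> b)"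
  by (simp add: galois_conn_def)

lemma gc_unit: "galois_conn \<alpha> \<beta> \<Longrightarrow> a \<le> \<beta> (\<alpha> a)"
  unfolding galois_conn_def by blast

lemma gc_counit: "galois_conn \<alpha> \<beta> \<Longrightarrow> \<alpha> (\<beta> b) \<le> b"
  by (simp add: galois_conn_def)

lemma gc_mono_a: "galois_conn \<alpha> \<beta> \<Longrightarrow> x \<le> y \<Longrightarrow> \<alpha> x \<le> \<alpha> y"
  unfolding galois_conn_def by (meson monoD)

lemma gc_mono_b: "galois_conn \<alpha> \<beta> \<Longrightarrow> x \<le> y \<Longrightarrow> \<beta> x \<le> \<beta> y"
  by (simp add: galois_conn_def monoD)

lemma gc_beta_inf:
  fixes \<alpha> :: "'a::bounded_lattice \<Rightarrow> 'b::bounded_lattice"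
  assumes gc: "galois_conn \<alpha> \<beta>"
  shows "\<beta> (inf x y) = inf (\<beta> x) (\<beta> y)"
proof (rule antisym)
  show "\<beta> (inf x y) \<le> inf (\<beta> x) (\<beta> y)" using gc_mono_b[OF gc] by simp
  have "\<alpha> (inf (\<beta> x) (\<beta> y)) \<le> inf x y"
    using gc_adj[OF gc] by (simp add: gc_adj[OF gc])
  then show "inf (\<beta> x) (\<beta> y) \<le> \<beta> (inf x y)" using gc_adj[OF gc] by blast
qed

lemma gc_alpha_bot:
  fixes \<alpha> :: "'a::bounded_lattice \<Rightarrow> 'b::bounded_lattice"
  assumes gc: "galois_conn \<alpha> \<beta>"
  shows "\<alpha> bot = bot"
  using gc_adj[OF gc, of bot bot] by (simp add: bot_unique)

lemma retr_bot:
  fixes \<alpha> :: "'a::bounded_lattice \<Rightarrow> 'b::bounded_lattice"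
  assumes gc: "galois_conn \<alpha> \<beta>" and retr: "retractable_gc \<alpha> \<beta>"
    and h: "\<beta> x = bot"
  shows "x = bot"
proof -
  have "essential_in (\<alpha> (\<beta> x)) x" using retr by (simp add: retractable_gc_def)
  moreover have "\<alpha> (\<beta> x) = bot" using h gc_alpha_bot[OF gc] by simp
  ultimately show ?thesis by (simp add: essential_in_def)
qed

lemma iii_core:
  fixes \<alpha> :: "'a::bounded_lattice \<Rightarrow> 'b::bounded_lattice"
  assumes gc: "galois_conn \<alpha> \<beta>" and retr: "retractable_gc \<alpha> \<beta>"
    and beta0: "\<beta> bot = bot"
    and ess: "essential_in b b'" and ey: "essential_in y (\<beta> (\<alpha> y))"
    and yle: "y \<le> \<beta> b'" and yb: "inf (\<beta> b) y = bot"
  shows "y = bot"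
proof -
  have ay: "\<alpha> y \<le> b'" using yle gc_adj[OF gc] by blast
  define z where "z = inf (\<alpha> y) b"
  have bz: "\<beta> z = inf (\<beta> (\<alpha> y)) (\<beta> b)" unfolding z_def by (rule gc_beta_inf[OF gc])
  have "inf y (\<beta> z) = bot" using yb unfolding bz
    by (metis inf.assoc inf.commute inf_bot_right)
  moreover have "\<beta> z \<le> \<beta> (\<alpha> y)" unfolding bz by simp
  ultimately have "\<beta> z = bot" using ey by (simp add: essential_in_def)
  then have "z = bot" using retr_bot[OF gc retr] by blast
  then have "inf b (\<alpha> y) = bot" unfolding z_def by (simp add: inf.commute)
  then have "\<alpha> y = bot" using ess ay by (simp add: essential_in_def)
  then have "y \<le> \<beta> bot" using gc_adj[OF gc] by (metis order_refl)
  then show ?thesis using beta0 by (simp add: bot_unique)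
qed

lemma iv_core:
  fixes \<alpha> :: "'a::bounded_lattice \<Rightarrow> 'b::bounded_lattice"
  assumes gc: "galois_conn \<alpha> \<beta>" and retr: "retractable_gc \<alpha> \<beta>"
    and beta0: "\<beta> bot = bot"
    and ea: "essential_in a (\<beta> (\<alpha> a))" and ex: "essential_in x (\<beta> (\<alpha> x))"
    and ess: "essential_in (\<alpha> a) (\<alpha> a')"
    and xle: "x \<le> a'" and ax: "inf a x = bot"
  shows "x = bot"
proof -
  define z where "z = inf (\<alpha> a) (\<alpha> x)"
  have bz: "\<beta> z = inf (\<beta> (\<alpha> a)) (\<beta> (\<alpha> x))" unfolding z_def by (rule gc_beta_inf[OF gc])
  have "\<beta> z = bot"
  proof (rule ccontr)
    assume nz: "\<beta> z \<noteq> bot"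
    have "inf a (\<beta> z) \<noteq> bot"
    proof
      assume "inf a (\<beta> z) = bot"
      moreover have "\<beta> z \<le> \<beta> (\<alpha> a)" unfolding bz by simp
      ultimately show False using ea nz by (simp add: essential_in_def)
    qed
    moreover have "inf a (\<beta> z) \<le> \<beta> (\<alpha> x)" unfolding bz by (simp add: le_infI2)
    ultimately have "inf x (inf a (\<beta> z)) \<noteq> bot" using ex unfolding essential_in_def by blast
    moreover have "inf x (inf a (\<beta> z)) = bot" using ax
      by (metis inf.assoc inf.commute inf_bot_left)
    ultimately show False by simp
  qed
  then have "z = bot" using retr_bot[OF gc retr] by blast
  moreover have "\<alpha> x \<le> \<alpha> a'" using gc_mono_a[OF gc xle] .
  ultimately have "\<alpha> x = bot" using ess unfolding z_def by (simp add: essential_in_def)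
  then have "x \<le> \<beta> bot" using gc_adj[OF gc] by (metis order_refl)
  then show ?thesis using beta0 by (simp add: bot_unique)
qed

lemma join_bot:
  fixes y :: "'a::bounded_lattice"
  assumes "is_join y S" and "\<forall>s\<in>S. s = bot"
  shows "y = bot"
  using assms unfolding is_join_def by (metis bot_unique order_refl)

theorem lemma2p7:
  fixes \<alpha> :: "'a::bounded_lattice \<Rightarrow> 'b::bounded_lattice" and \<beta> :: "'b \<Rightarrow> 'a"
  assumes A_nontriv: "(bot::'a) \<noteq> top"
    and B_nontriv: "(bot::'b) \<noteq> top"
    and gc: "galois_conn \<alpha> \<beta>"
    and retr: "retractable_gc \<alpha> \<beta>"
    and beta0: "\<beta> bot = bot"
  shows
    "(\<forall>b b'. essential_in (\<beta> b) (\<beta> b') \<longrightarrow> essential_in (inf b b') b')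
   \<and> (\<forall>a a'. essential_in a a' \<longrightarrow> galois_elem \<alpha> \<beta> a' \<longrightarrow> essential_in (\<alpha> a) (\<alpha> a'))
   \<and> (essential_gc \<alpha> \<beta> \<longrightarrow>
        (\<forall>b b'. essential_in b b' \<longrightarrow> essential_in (\<beta> b) (\<beta> b'))
      \<and> (\<forall>a a'. essential_in (\<alpha> a) (\<alpha> a') \<longrightarrow> essential_in (inf a a') a'))
   \<and> (cyclically_essential_gc \<alpha> \<beta> \<and> cyclically_generated TYPE('a) \<longrightarrow>
        (\<forall>b b'. essential_in b b' \<longrightarrow> essential_in (\<beta> b) (\<beta> b'))
      \<and> (\<forall>a a'. cyclic a \<longrightarrow> essential_in (\<alpha> a) (\<alpha> a') \<longrightarrow> essential_in (inf a a') a'))"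
proof (intro conjI allI impI)
  fix b b' assume h: "essential_in (\<beta> b) (\<beta> b')"
  show "essential_in (inf b b') b'"
    unfolding essential_in_def
  proof (intro conjI allI impI)
    show "inf b b' \<le> b'" by simp
    fix x assume xl: "x \<le> b'" and i: "inf (inf b b') x = bot"
    have "inf b x = bot" using inf_bot_in[OF xl i] .
    then have "inf (\<beta> b) (\<beta> x) = bot" using gc_beta_inf[OF gc, of b x] beta0 by simp
    moreover have "\<beta> x \<le> \<beta> b'" using gc_mono_b[OF gc xl] .
    ultimately have "\<beta> x = bot" using h by (simp add: essential_in_def)
    then show "x = bot" using retr_bot[OF gc retr] by blast
  qed
next
  fix a :: 'a and a' assume h: "essential_in a a'" and g: "galois_elem \<alpha> \<beta> a'"
  show "essential_in (\<alpha> a) (\<alpha> a')"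
    unfolding essential_in_def
  proof (intro conjI allI impI)
    show "\<alpha> a \<le> \<alpha> a'" using h gc_mono_a[OF gc] by (simp add: essential_in_def)
    fix x assume xl: "x \<le> \<alpha> a'" and i: "inf (\<alpha> a) x = bot"
    have bx: "\<beta> x \<le> a'" using gc_mono_b[OF gc xl] g by (simp add: galois_elem_def)
    have "\<alpha> (inf (\<beta> x) a) \<le> inf x (\<alpha> a)"
      using gc_mono_a[OF gc, of "inf (\<beta> x) a" "\<beta> x"] gc_mono_a[OF gc, of "inf (\<beta> x) a" a]
        gc_counit[OF gc, of x] by (meson inf.cobounded1 inf.cobounded2 le_inf_iff order_trans)
    then have "\<alpha> (inf (\<beta> x) a) \<le> bot" using i by (metis inf.commute)
    then have "inf (\<beta> x) a \<le> \<beta> bot" using gc_adj[OF gc] by blast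
    then have "inf a (\<beta> x) = bot" using beta0 by (simp add: inf.commute bot_unique)
    then have "\<beta> x = bot" using h bx by (simp add: essential_in_def)
    then show "x = bot" using retr_bot[OF gc retr] by blast
  qed
next
  fix b b' :: 'b assume E: "essential_gc \<alpha> \<beta>" and h: "essential_in b b'"
  show "essential_in (\<beta> b) (\<beta> b')"
    unfolding essential_in_def
  proof (intro conjI allI impI)
    show "\<beta> b \<le> \<beta> b'" using h gc_mono_b[OF gc] by (simp add: essential_in_def)
    fix y assume y1: "y \<le> \<beta> b'" and y2: "inf (\<beta> b) y = bot"
    have y3: "essential_in y (\<beta> (\<alpha> y))" using E by (simp add: essential_gc_def)
    show "y = bot" by (rule iii_core[OF gc retr beta0 h y3 y1 y2])
  qed
next
  fix a a' :: 'a assume E: "essential_gc \<alpha> \<beta>" and h: "essential_in (\<alpha> a) (\<alpha> a')"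
  show "essential_in (inf a a') a'"
    unfolding essential_in_def
  proof (intro conjI allI impI)
    show "inf a a' \<le> a'" by simp
    fix x assume xl: "x \<le> a'" and i: "inf (inf a a') x = bot"
    have "inf a x = bot" using inf_bot_in[OF xl i] .
    moreover have "essential_in a (\<beta> (\<alpha> a))" "essential_in x (\<beta> (\<alpha> x))"
      using E by (simp_all add: essential_gc_def)
    ultimately show "x = bot" using iv_core[OF gc retr beta0 _ _ h xl] by blast
  qed
next
  fix b b' :: 'b assume C: "cyclically_essential_gc \<alpha> \<beta> \<and> cyclically_generated TYPE('a)"
    and h: "essential_in b b'"
  show "essential_in (\<beta> b) (\<beta> b')"
    unfolding essential_in_def
  proof (intro conjI allI impI)
    show "\<beta> b \<le> \<beta> b'" using h gc_mono_b[OF gc] by (simp add: essential_in_def)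
    fix y assume yl: "y \<le> \<beta> b'" and yi: "inf (\<beta> b) y = bot"
    obtain S where S: "\<forall>s\<in>S. cyclic s" "is_join y S"
      using C unfolding cyclically_generated_def by blast
    have "\<forall>s\<in>S. s = bot"
    proof
      fix s assume sS: "s \<in> S"
      have sy: "s \<le> y" using S(2) sS by (simp add: is_join_def)
      have s1: "inf (\<beta> b) s = bot" using inf_bot_mono[OF sy yi] .
      have s2: "s \<le> \<beta> b'" using sy yl by simp
      have s3: "essential_in s (\<beta> (\<alpha> s))" using C S(1) sS
        by (simp add: cyclically_essential_gc_def)
      show "s = bot" by (rule iii_core[OF gc retr beta0 h s3 s2 s1])
    qed
    then show "y = bot" using join_bot S(2) by blast
  qed
next
  fix a a' :: 'a assume C: "cyclically_essential_gc \<alpha> \<beta> \<and> cyclically_generated TYPE('a)"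
    and ca: "cyclic a" and h: "essential_in (\<alpha> a) (\<alpha> a')"
  have ea: "essential_in a (\<beta> (\<alpha> a))" using C ca by (simp add: cyclically_essential_gc_def)
  show "essential_in (inf a a') a'"
    unfolding essential_in_def
  proof (intro conjI allI impI)
    show "inf a a' \<le> a'" by simp
    fix x assume xl: "x \<le> a'" and i: "inf (inf a a') x = bot"
    have ax: "inf a x = bot" using inf_bot_in[OF xl i] .
    obtain S where S: "\<forall>s\<in>S. cyclic s" "is_join x S"
      using C unfolding cyclically_generated_def by blast
    have "\<forall>s\<in>S. s = bot"
    proof
      fix s assume sS: "s \<in> S"
      have sx: "s \<le> x" using S(2) sS by (simp add: is_join_def)
      have s1: "inf a s = bot" using inf_bot_mono[OF sx ax] .
      have s2: "s \<le> a'" using sx xl by simp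
      have s3: "essential_in s (\<beta> (\<alpha> s))" using C S(1) sS
        by (simp add: cyclically_essential_gc_def)
      show "s = bot" by (rule iv_core[OF gc retr beta0 ea s3 h s2 s1])
    qed
    then show "x = bot" using join_bot S(2) by blast
  qed
qed

end
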